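(* Let $X$ be a compact metric space and $f\colon X\to X$ continuous. If $(X,f)$ has two-sided cofinal orbital shadowing, then it has property $P_a$.
   Context: $d_H$ is the Hausdorff metric. A full trajectory is $\langle z_i\rangle_{i\in\mathbb Z}$ with $f(z_i)=z_{i+1}$. For two-sided sequences, $\omega(\langle x_i\rangle)=\bigcap_{M}\overline{\{x_n:n>M\}}$, $\alpha(\langle x_i\rangle)=\bigcap_{M}\overline{\{x_n:n<-M\}}$. $ICT_f$ is the set of nonempty closed internally chain transitive sets ($A$ is internally chain transitive if for all $a,b\in A$ and $\delta>0$ there exist $x_0=a,\dots,x_N=b$ in $A$, $N\ge1$, with $d(f(x_i),x_{i+1})<\delta$). Property $P_a$: for every $A\in ICT_f$ and $\epsilon>0$ there is a full trajectory $\langle x_i\rangle$ with $d_H(\alpha(\langle x_i\rangle),A)<\epsilon$ and $d_H(\omega(\langle x_i\rangle),A)<\epsilon$. A two-sided $\delta$-pseudo-orbit is $\langle x_i\rangle_{i\in\mathbb Z}$ with $d(f(x_i),x_{i+1})<\delta$ for all $i$. Two-sided cofinal orbital shadowing: for every $\epsilon>0$ there is $\delta>0$ such that for every two-sided $\delta$-pseudo-orbit $\langle x_i\rangle$ there is a full trajectory $\langle z_i\rangle$ such that for every $K\in\mathbb N$ there is $N\ge K$ with $d_H(\overline{\{z_{N+i}\}_{i\ge0}},\overline{\{x_{N+i}\}_{i\ge0}})<\epsilon$ and $d_H(\overline{\{z_{i-N}\}_{i\le0}},\overline{\{x_{i-N}\}_{i\le0}})<\epsilon$. *)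

theory Defs
  imports "HOL-Analysis.Analysis"
begin

definition hausdorff_dist :: "'a::metric_space set \<Rightarrow> 'a set \<Rightarrow> real" where
  "hausdorff_dist A B = max (SUP a\<in>A. infdist a B) (SUP b\<in>B. infdist b A)"

definition full_trajectory :: "'a set \<Rightarrow> ('a \<Rightarrow> 'a) \<Rightarrow> (int \<Rightarrow> 'a) \<Rightarrow> bool" where
  "full_trajectory X f z \<longleftrightarrow> (\<forall>i. z i \<in> X \<and> f (z i) = z (i + 1))"

definition omega_set :: "(int \<Rightarrow> 'a::topological_space) \<Rightarrow> 'a set" where
  "omega_set x = (\<Inter>M. closure {x n | n. n > M})"

definition alpha_set :: "(int \<Rightarrow> 'a::topological_space) \<Rightarrow> 'a set" where
  "alpha_set x = (\<Inter>M. closure {x n | n. n < - M})"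

definition internally_chain_transitive :: "('a::metric_space \<Rightarrow> 'a) \<Rightarrow> 'a set \<Rightarrow> bool" where
  "internally_chain_transitive f A \<longleftrightarrow>
     (\<forall>a\<in>A. \<forall>b\<in>A. \<forall>\<delta>>0. \<exists>N::nat. \<exists>x::nat \<Rightarrow> 'a. N \<ge> 1 \<and> x 0 = a \<and> x N = b \<and>
        (\<forall>i\<le>N. x i \<in> A) \<and> (\<forall>i<N. dist (f (x i)) (x (Suc i)) < \<delta>))"

definition ICT :: "'a::metric_space set \<Rightarrow> ('a \<Rightarrow> 'a) \<Rightarrow> 'a set set" where
  "ICT X f = {A. A \<subseteq> X \<and> A \<noteq> {} \<and> closed A \<and> internally_chain_transitive f A}"

definition property_Pa :: "'a::metric_space set \<Rightarrow> ('a \<Rightarrow> 'a) \<Rightarrow> bool" where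
  "property_Pa X f \<longleftrightarrow>
     (\<forall>A\<in>ICT X f. \<forall>\<epsilon>>0. \<exists>x. full_trajectory X f x \<and>
        hausdorff_dist (alpha_set x) A < \<epsilon> \<and> hausdorff_dist (omega_set x) A < \<epsilon>)"

definition two_sided_pseudo_orbit :: "'a::metric_space set \<Rightarrow> ('a \<Rightarrow> 'a) \<Rightarrow> real \<Rightarrow> (int \<Rightarrow> 'a) \<Rightarrow> bool" where
  "two_sided_pseudo_orbit X f \<delta> x \<longleftrightarrow> (\<forall>i. x i \<in> X \<and> dist (f (x i)) (x (i + 1)) < \<delta>)"

definition two_sided_cofinal_orbital_shadowing :: "'a::metric_space set \<Rightarrow> ('a \<Rightarrow> 'a) \<Rightarrow> bool" where
  "two_sided_cofinal_orbital_shadowing X f \<longleftrightarrow>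
     (\<forall>\<epsilon>>0. \<exists>\<delta>>0. \<forall>x. two_sided_pseudo_orbit X f \<delta> x \<longrightarrow>
        (\<exists>z. full_trajectory X f z \<and>
          (\<forall>K::nat. \<exists>N::nat. N \<ge> K \<and>
             hausdorff_dist (closure {z (int N + int i) | i::nat. True})
                            (closure {x (int N + int i) | i::nat. True}) < \<epsilon> \<and>
             hausdorff_dist (closure {z (- int i - int N) | i::nat. True})
                            (closure {x (- int i - int N) | i::nat. True}) < \<epsilon>)))"

end

theory Submission
  imports Defs
begin
lemma infdist_lessE: assumes "infdist x S < e" "S \<noteq> {}" shows "\<exists>y\<in>S. dist x y < e"
proof (rule ccontr)
  assume "\<not> ?thesis"
  then have "\<forall>y\<in>S. e \<le> dist x y" by auto
  then have "e \<le> infdist x S" unfolding infdist_notempty[OF assms(2)]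
    by (intro cINF_greatest assms(2)) auto
  then show False using assms by simp
qed
lemma infdist_closure_eq: "infdist x (closure S) = infdist x S"
  by (simp add: infdist_eq_setdist)

lemma hd_bdd:
  assumes "P \<subseteq> X" "Q \<subseteq> X" "Q \<noteq> {}" "bounded X"
  shows "bdd_above ((\<lambda>p. infdist p Q) ` P)"
proof -
  obtain q where q: "q \<in> Q" using assms by auto
  obtain c B where cB: "\<forall>x\<in>X. dist c x \<le> B" using assms(4) unfolding bounded_def by auto
  have "infdist p Q \<le> 2*B" if "p \<in> P" for p
  proof -
    have "infdist p Q \<le> dist p q" by (rule infdist_le[OF q])
    also have "\<dots> \<le> dist c p + dist c q" by (metis dist_commute dist_triangle)
    also have "\<dots> \<le> 2*B"
    proof -
      have "dist c p \<le> B" "dist c q \<le> B" using cB that q assms(1,2) by auto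
      then show ?thesis by linarith
    qed
    finally show ?thesis .
  qed
  then show ?thesis by (intro bdd_aboveI[of _ "2*B"]) auto
qed

lemma hd_bound1:
  assumes "hausdorff_dist P Q < e" "p \<in> P" "P \<subseteq> X" "Q \<subseteq> X" "Q \<noteq> {}" "bounded X"
  shows "infdist p Q < e"
proof -
  have "infdist p Q \<le> (SUP a\<in>P. infdist a Q)"
    by (rule cSUP_upper[OF assms(2) hd_bdd[OF assms(3-6)]])
  then show ?thesis using assms(1) unfolding hausdorff_dist_def by linarith
qed

lemma hd_bound2:
  assumes "hausdorff_dist P Q < e" "q \<in> Q" "P \<subseteq> X" "Q \<subseteq> X" "P \<noteq> {}" "bounded X"
  shows "infdist q P < e"
proof -
  have "infdist q P \<le> (SUP a\<in>Q. infdist a P)"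
    by (rule cSUP_upper[OF assms(2) hd_bdd[OF assms(4,3,5,6)]])
  then show ?thesis using assms(1) unfolding hausdorff_dist_def by linarith
qed

definition tl_set :: "(nat \<Rightarrow> 'a) \<Rightarrow> nat \<Rightarrow> 'a set" where
  "tl_set v N = {v (N+i) | i. True}"

lemma tl_set_mem: "n \<ge> N \<Longrightarrow> v n \<in> tl_set v N"
  unfolding tl_set_def by (rule CollectI, rule exI[of _ "n - N"]) simp

lemma tl_set_mono: "M \<le> N \<Longrightarrow> tl_set v N \<subseteq> tl_set v M"
proof
  fix x assume "M \<le> N" "x \<in> tl_set v N"
  then obtain i where "x = v (N+i)" unfolding tl_set_def by auto
  then show "x \<in> tl_set v M" using tl_set_mem[of M "N+i" v] \<open>M \<le> N\<close> by simp
qed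

lemma generic:
  fixes u v :: "nat \<Rightarrow> 'a::metric_space"
  assumes X: "compact X" and AX: "A \<subseteq> X" and cA: "closed A" and neA: "A \<noteq> {}"
    and uA: "\<forall>n. u n \<in> A" and vX: "\<forall>n. v n \<in> X" and e: "e > 0"
    and dens: "\<forall>N. \<forall>a\<in>A. \<exists>n\<ge>N. dist a (u n) < e/4"
    and sh: "\<forall>K. \<exists>N\<ge>K. hausdorff_dist (closure (tl_set v N)) (closure (tl_set u N)) < e/2"
  shows "hausdorff_dist (\<Inter>M. closure (tl_set v M)) A < e"
proof -
  define \<Omega> where "\<Omega> = (\<Inter>M. closure (tl_set v M))"
  have bX: "bounded X" and cX: "closed X" using X compact_imp_bounded compact_imp_closed by auto
  have tvX: "closure (tl_set v M) \<subseteq> X" for M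
    by (rule closure_minimal) (use vX cX in \<open>auto simp: tl_set_def\<close>)
  have tuA: "closure (tl_set u M) \<subseteq> A" for M
    by (rule closure_minimal) (use uA cA in \<open>auto simp: tl_set_def\<close>)
  have tuX: "closure (tl_set u M) \<subseteq> X" for M using tuA AX by blast
  have netv: "tl_set v M \<noteq> {}" for M using tl_set_mem[of M M v] by auto
  have netu: "tl_set u M \<noteq> {}" for M using tl_set_mem[of M M u] by auto
  have part2: "infdist w A \<le> e/2" if w: "w \<in> \<Omega>" for w
  proof -
    obtain N where hd: "hausdorff_dist (closure (tl_set v N)) (closure (tl_set u N)) < e/2"
      using sh by blast
    have "w \<in> closure (tl_set v N)" using w unfolding \<Omega>_def by blast
    then have "infdist w (closure (tl_set u N)) < e/2"
      using hd_bound1[OF hd _ tvX tuX _ bX] netu by auto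
    moreover have "infdist w A \<le> infdist w (closure (tl_set u N))"
      using infdist_mono[OF tuA] netu by auto
    ultimately show ?thesis by linarith
  qed
  have part1: "\<exists>w\<in>\<Omega>. dist a w \<le> 3*e/4" if a: "a \<in> A" for a
  proof -
    have key: "\<exists>m\<ge>M. dist a (v m) < 3*e/4" for M
    proof -
      obtain N where N: "N \<ge> M" and hd: "hausdorff_dist (closure (tl_set v N)) (closure (tl_set u N)) < e/2"
        using sh by blast
      obtain n where n: "n \<ge> N" "dist a (u n) < e/4" using dens a by blast
      have "u n \<in> closure (tl_set u N)" using tl_set_mem[OF n(1)] closure_subset by blast
      then have "infdist (u n) (closure (tl_set v N)) < e/2"
        using hd_bound2[OF hd _ tvX tuX _ bX] netv by auto
      then have "infdist (u n) (tl_set v N) < e/2" by (simp add: infdist_closure_eq)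
      then obtain y where y: "y \<in> tl_set v N" "dist (u n) y < e/2"
        using infdist_lessE netv by blast
      then obtain i where yi: "y = v (N+i)" unfolding tl_set_def by auto
      have "dist a y < 3*e/4" using y n dist_triangle[of a y "u n"] by simp
      then show ?thesis using yi N by (intro exI[of _ "N+i"]) auto
    qed
    define S where "S = X \<inter> cball a (3*e/4)"
    have cS: "compact S" unfolding S_def using X by (simp add: compact_Int_closed)
    have "S \<inter> \<Inter>(range (\<lambda>M. closure (tl_set v M))) \<noteq> {}"
    proof (rule compact_imp_fip[OF cS])
      fix F' assume F': "finite F'" "F' \<subseteq> range (\<lambda>M. closure (tl_set v M))"
      then obtain Ms where Ms: "finite Ms" "F' = (\<lambda>M. closure (tl_set v M)) ` Ms"
        by (meson finite_subset_image)
      define M0 where "M0 = Max (insert 0 Ms)"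
      have "M \<le> M0" if "M \<in> Ms" for M using Ms that unfolding M0_def by simp
      then have sub: "closure (tl_set v M0) \<subseteq> \<Inter>F'" using Ms
        using closure_mono[OF tl_set_mono[of _ M0 v]] by blast
      obtain m where m: "m \<ge> M0" "dist a (v m) < 3*e/4" using key by blast
      have "v m \<in> S" using m vX unfolding S_def by auto
      moreover have "v m \<in> closure (tl_set v M0)" using tl_set_mem[OF m(1)] closure_subset by blast
      ultimately show "S \<inter> \<Inter>F' \<noteq> {}" using sub by blast
    qed auto
    then obtain w where "w \<in> S" "w \<in> \<Omega>" unfolding \<Omega>_def by blast
    then show ?thesis unfolding S_def by auto
  qed
  have neO: "\<Omega> \<noteq> {}" using part1 neA by blast
  have s1: "(SUP w\<in>\<Omega>. infdist w A) \<le> e/2"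
    by (rule cSUP_least[OF neO part2])
  have s2: "(SUP a\<in>A. infdist a \<Omega>) \<le> 3*e/4"
  proof (rule cSUP_least[OF neA])
    fix a assume "a \<in> A"
    then obtain w where "w \<in> \<Omega>" "dist a w \<le> 3*e/4" using part1 by blast
    then show "infdist a \<Omega> \<le> 3*e/4" using infdist_le2 by blast
  qed
  show ?thesis using s1 s2 e unfolding hausdorff_dist_def \<Omega>_def[symmetric] by simp
qed

definition chn :: "('a::metric_space \<Rightarrow> 'a) \<Rightarrow> 'a set \<Rightarrow> real \<Rightarrow> nat \<Rightarrow> (nat \<Rightarrow> 'a) \<Rightarrow> 'a \<Rightarrow> 'a \<Rightarrow> bool" where
  "chn f A \<delta> N c a b \<longleftrightarrow> N \<ge> 1 \<and> c 0 = a \<and> c N = b \<and> (\<forall>i\<le>N. c i \<in> A) \<and> (\<forall>i<N. dist (f (c i)) (c (Suc i)) < \<delta>)"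

lemma chn_concat:
  assumes "chn f A \<delta> N c a b" "chn f A \<delta> M d b b'"
  shows "chn f A \<delta> (N+M) (\<lambda>i. if i \<le> N then c i else d (i - N)) a b'"
  unfolding chn_def
proof (intro conjI allI impI)
  show "1 \<le> N + M" using assms unfolding chn_def by auto
  show "(if 0 \<le> N then c 0 else d (0 - N)) = a" using assms unfolding chn_def by auto
  show "(if N + M \<le> N then c (N + M) else d (N + M - N)) = b'" using assms unfolding chn_def by auto
  fix i
  show "i \<le> N + M \<Longrightarrow> (if i \<le> N then c i else d (i - N)) \<in> A"
    using assms unfolding chn_def by auto
  assume i: "i < N + M"
  show "dist (f (if i \<le> N then c i else d (i - N))) (if Suc i \<le> N then c (Suc i) else d (Suc i - N)) < \<delta>"
  proof (cases "i < N")
    case True then show ?thesis using assms unfolding chn_def by auto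
  next
    case False
    then have "Suc i - N = Suc (i - N)" "i - N < M" using i by auto
    moreover have "(if i \<le> N then c i else d (i - N)) = d (i - N)"
      using False assms unfolding chn_def by auto
    ultimately show ?thesis using False assms unfolding chn_def by auto
  qed
qed

lemma chn_loop:
  assumes ict: "internally_chain_transitive f A" and d: "\<delta> > 0" and a: "a \<in> A"
  shows "finite S \<Longrightarrow> S \<subseteq> A \<Longrightarrow> \<exists>N c. chn f A \<delta> N c a a \<and> S \<subseteq> c ` {..N}"
proof (induction S rule: finite_induct)
  case empty
  then show ?case using ict d a unfolding internally_chain_transitive_def chn_def by blast
next
  case (insert s S)
  then obtain N c where Nc: "chn f A \<delta> N c a a" "S \<subseteq> c ` {..N}" by auto
  have s: "s \<in> A" using insert by auto
  obtain M1 d1 where 1: "chn f A \<delta> M1 d1 a s"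
    using ict d a s unfolding internally_chain_transitive_def chn_def by blast
  obtain M2 d2 where 2: "chn f A \<delta> M2 d2 s a"
    using ict d a s unfolding internally_chain_transitive_def chn_def by blast
  define c1 where "c1 = (\<lambda>i. if i \<le> N then c i else d1 (i - N))"
  have c1: "chn f A \<delta> (N+M1) c1 a s" unfolding c1_def by (rule chn_concat[OF Nc(1) 1])
  define c2 where "c2 = (\<lambda>i. if i \<le> N+M1 then c1 i else d2 (i - (N+M1)))"
  have c2: "chn f A \<delta> (N+M1+M2) c2 a a" unfolding c2_def by (rule chn_concat[OF c1 2])
  have "c2 (N+M1) = s" using c1 unfolding c2_def chn_def by auto
  then have "s \<in> c2 ` {..N+M1+M2}" by (metis atMost_iff image_eqI le_add1)
  moreover have "S \<subseteq> c2 ` {..N+M1+M2}"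
  proof
    fix y assume "y \<in> S"
    then obtain j where j: "j \<le> N" "y = c j" using Nc(2) by auto
    then have "c2 j = y" unfolding c2_def c1_def by auto
    then show "y \<in> c2 ` {..N+M1+M2}" using j by (intro image_eqI[of _ _ j]) auto
  qed
  ultimately show ?case using c2 by blast
qed

lemma periodic:
  assumes "chn f A \<delta> P c a a"
  defines "x \<equiv> (\<lambda>i::int. c (nat (i mod int P)))"
  shows "\<forall>i. x i \<in> A \<and> dist (f (x i)) (x (i + 1)) < \<delta>"
    and "\<And>j N. j \<le> P \<Longrightarrow> \<exists>n\<ge>N. x (int n) = c j"
    and "\<And>j N. j \<le> P \<Longrightarrow> \<exists>n\<ge>N. x (- int n) = c j"
proof -
  have P: "P \<ge> 1" "c 0 = a" "c P = a" "\<forall>i\<le>P. c i \<in> A" "\<forall>i<P. dist (f (c i)) (c (Suc i)) < \<delta>"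
    using assms(1) unfolding chn_def by auto
  show "\<forall>i. x i \<in> A \<and> dist (f (x i)) (x (i + 1)) < \<delta>"
  proof
    fix i
    define j where "j = nat (i mod int P)"
    have jP: "j < P" unfolding j_def using P(1) by (simp add: nat_less_iff)
    have ij: "i mod int P = int j" unfolding j_def using P(1) by simp
    have "x (i+1) = c (Suc j)"
    proof (cases "Suc j < P")
      case True
      have "(i+1) mod int P = (i mod int P + 1) mod int P" by (simp add: mod_add_left_eq)
      also have "\<dots> = (int j + 1) mod int P" by (simp only: ij)
      also have "\<dots> = int j + 1" using True by simp
      also have "\<dots> = int (Suc j)" by simp
      finally have h: "(i+1) mod int P = int (Suc j)" .
      show ?thesis unfolding x_def h nat_int ..
    next
      case False
      then have "Suc j = P" using jP by simp
      have "(i+1) mod int P = (i mod int P + 1) mod int P" by (simp add: mod_add_left_eq)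
      also have "\<dots> = (int j + 1) mod int P" by (simp only: ij)
      also have "int j + 1 = int P" using \<open>Suc j = P\<close> by simp
      also have "int P mod int P = 0" by simp
      finally have h: "(i+1) mod int P = 0" .
      show ?thesis unfolding x_def h using \<open>Suc j = P\<close> P by simp
    qed
    moreover have "x i = c j" unfolding x_def j_def by simp
    ultimately show "x i \<in> A \<and> dist (f (x i)) (x (i + 1)) < \<delta>" using P jP by auto
  qed
  have red: "\<exists>j'<P. c j' = c j" if "j \<le> P" for j
  proof (cases "j = P")
    case True then show ?thesis using P by (intro exI[of _ 0]) auto
  next
    case False then show ?thesis using that by (intro exI[of _ j]) auto
  qed
  show "\<exists>n\<ge>N. x (int n) = c j" if jle: "j \<le> P" for j N
  proof -
    obtain j' where j': "j' < P" "c j' = c j" using red[OF jle] by blast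
    have h0: "(N*P + j') mod P = j'" using j' by simp
    have "int (N*P + j') mod int P = int ((N*P + j') mod P)" by (rule of_nat_mod[symmetric])
    then have h: "int (N*P + j') mod int P = int j'" unfolding h0 .
    have "x (int (N*P+j')) = c j" unfolding x_def h nat_int using j' by simp
    moreover have "N*P + j' \<ge> N" using P(1) by (simp add: trans_le_add1)
    ultimately show ?thesis by blast
  qed
  show "\<exists>n\<ge>N. x (- int n) = c j" if jle: "j \<le> P" for j N
  proof -
    obtain j' where j': "j' < P" "c j' = c j" using red[OF jle] by blast
    have k: "int (N*P + (P - j')) = int N * int P + int P - int j'" using j' by (simp add: of_nat_diff)
    have eq: "- int (N*P + (P - j')) = int j' + (- (int N + 1)) * int P" unfolding k by (simp add: algebra_simps)
    have "(int j' + (- (int N + 1)) * int P) mod int P = int j' mod int P" by (rule mod_mult_self1)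
    also have "\<dots> = int j'" using j' by simp
    finally have h: "(- int (N*P + (P - j'))) mod int P = int j'" unfolding eq .
    have "x (- int (N*P+(P-j'))) = c j" unfolding x_def h nat_int using j' by simp
    moreover have "N*P + (P-j') \<ge> N" using P(1) by (simp add: trans_le_add1)
    ultimately show ?thesis by blast
  qed
qed

lemma omega_eq:
  fixes z :: "int \<Rightarrow> 'a::metric_space"
  shows "omega_set z = (\<Inter>M. closure (tl_set (\<lambda>n. z (int n)) M))"
proof
  show "omega_set z \<subseteq> (\<Inter>M. closure (tl_set (\<lambda>n. z (int n)) M))"
  proof (intro subsetI InterI, clarify)
    fix w M assume w: "w \<in> omega_set z"
    have "{z n | n. n > int M - 1} \<subseteq> tl_set (\<lambda>n. z (int n)) M"
    proof
      fix y assume "y \<in> {z n | n. n > int M - 1}"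
      then obtain n where n: "y = z n" "n > int M - 1" by auto
      then have "n = int (M + nat (n - int M))" by simp
      then have "y = (\<lambda>n. z (int n)) (M + nat (n - int M))" using n by simp
      then show "y \<in> tl_set (\<lambda>n. z (int n)) M" unfolding tl_set_def by blast
    qed
    moreover have "w \<in> closure {z n | n. n > int M - 1}" using w unfolding omega_set_def by blast
    ultimately show "w \<in> closure (tl_set (\<lambda>n. z (int n)) M)" using closure_mono by blast
  qed
  show "(\<Inter>M. closure (tl_set (\<lambda>n. z (int n)) M)) \<subseteq> omega_set z"
  proof (unfold omega_set_def, intro subsetI InterI, clarify)
    fix w M assume w: "w \<in> (\<Inter>M. closure (tl_set (\<lambda>n. z (int n)) M))"
    have "tl_set (\<lambda>n. z (int n)) (nat (M+1)) \<subseteq> {z n | n. n > M}"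
    proof
      fix y assume "y \<in> tl_set (\<lambda>n. z (int n)) (nat (M+1))"
      then obtain i where "y = z (int (nat (M+1) + i))" unfolding tl_set_def by auto
      moreover have "int (nat (M+1) + i) > M" by simp
      ultimately show "y \<in> {z n | n. n > M}" by blast
    qed
    moreover have "w \<in> closure (tl_set (\<lambda>n. z (int n)) (nat (M+1)))" using w by blast
    ultimately show "w \<in> closure {z n | n. n > M}" using closure_mono by blast
  qed
qed

lemma alpha_eq:
  fixes z :: "int \<Rightarrow> 'a::metric_space"
  shows "alpha_set z = (\<Inter>M. closure (tl_set (\<lambda>n. z (- int n)) M))"
proof
  show "alpha_set z \<subseteq> (\<Inter>M. closure (tl_set (\<lambda>n. z (- int n)) M))"
  proof (intro subsetI InterI, clarify)
    fix w M assume w: "w \<in> alpha_set z"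
    have "{z n | n. n < - (int M - 1)} \<subseteq> tl_set (\<lambda>n. z (- int n)) M"
    proof
      fix y assume "y \<in> {z n | n. n < - (int M - 1)}"
      then obtain n where n: "y = z n" "n < - (int M - 1)" by auto
      then have "n = - int (M + nat (- n - int M))" by simp
      then have "y = (\<lambda>n. z (- int n)) (M + nat (- n - int M))" using n by simp
      then show "y \<in> tl_set (\<lambda>n. z (- int n)) M" unfolding tl_set_def by blast
    qed
    moreover have "w \<in> closure {z n | n. n < - (int M - 1)}" using w unfolding alpha_set_def by blast
    ultimately show "w \<in> closure (tl_set (\<lambda>n. z (- int n)) M)" using closure_mono by blast
  qed
  show "(\<Inter>M. closure (tl_set (\<lambda>n. z (- int n)) M)) \<subseteq> alpha_set z"
  proof (unfold alpha_set_def, intro subsetI InterI, clarify)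
    fix w M assume w: "w \<in> (\<Inter>M. closure (tl_set (\<lambda>n. z (- int n)) M))"
    have "tl_set (\<lambda>n. z (- int n)) (nat (M+1)) \<subseteq> {z n | n. n < - M}"
    proof
      fix y assume "y \<in> tl_set (\<lambda>n. z (- int n)) (nat (M+1))"
      then obtain i where "y = z (- int (nat (M+1) + i))" unfolding tl_set_def by auto
      moreover have "- int (nat (M+1) + i) < - M" by simp
      ultimately show "y \<in> {z n | n. n < - M}" by blast
    qed
    moreover have "w \<in> closure (tl_set (\<lambda>n. z (- int n)) (nat (M+1)))" using w by blast
    ultimately show "w \<in> closure {z n | n. n < - M}" using closure_mono by blast
  qed
qed

lemma tl_fw: "tl_set (\<lambda>n. w (int n)) N = {w (int N + int i) | i. True}"
  by (simp add: tl_set_def)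

lemma tl_bw: "tl_set (\<lambda>n. w (- int n)) N = {w (- int i - int N) | i. True}"
proof -
  have "\<And>i. - int (N+i) = - int i - int N" by simp
  then show ?thesis unfolding tl_set_def by (simp only:)
qed

theorem mainTheorem7:
  fixes X :: "'a::metric_space set" and f :: "'a \<Rightarrow> 'a"
  assumes "compact X" and "continuous_on X f" and "f ` X \<subseteq> X"
    and "two_sided_cofinal_orbital_shadowing X f"
  shows "property_Pa X f"
  unfolding property_Pa_def
proof (intro ballI allI impI)
  fix A and e :: real assume A: "A \<in> ICT X f" and e: "e > 0"
  then have AX: "A \<subseteq> X" "A \<noteq> {}" "closed A" "internally_chain_transitive f A"
    by (auto simp: ICT_def)
  have cA: "compact A" using compact_Int_closed[OF assms(1) AX(3)] AX(1) by (simp add: Int_absorb1)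
  have e4: "e/4 > 0" using e by simp
  obtain S where S: "finite S" "S \<subseteq> A" "A \<subseteq> (\<Union>s\<in>S. ball s (e/4))"
    using seq_compact_imp_totally_bounded[OF compact_imp_seq_compact[OF cA], rule_format, OF e4] by blast
  have e2: "e/2 > 0" using e by simp
  obtain \<delta> where d: "\<delta> > 0" and shad: "\<forall>x. two_sided_pseudo_orbit X f \<delta> x \<longrightarrow>
        (\<exists>z. full_trajectory X f z \<and>
          (\<forall>K::nat. \<exists>N::nat. N \<ge> K \<and>
             hausdorff_dist (closure {z (int N + int i) | i::nat. True})
                            (closure {x (int N + int i) | i::nat. True}) < e/2 \<and>
             hausdorff_dist (closure {z (- int i - int N) | i::nat. True})
                            (closure {x (- int i - int N) | i::nat. True}) < e/2))"
    using assms(4) e2 unfolding two_sided_cofinal_orbital_shadowing_def by blast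
  obtain a where a: "a \<in> A" using AX by auto
  obtain P c where Pc: "chn f A \<delta> P c a a" "S \<subseteq> c ` {..P}"
    using chn_loop[OF AX(4) d a S(1,2)] by blast
  define x where "x = (\<lambda>i::int. c (nat (i mod int P)))"
  have per1: "\<forall>i. x i \<in> A \<and> dist (f (x i)) (x (i + 1)) < \<delta>"
    unfolding x_def by (fact periodic(1)[OF Pc(1)])
  have per2: "\<And>j N. j \<le> P \<Longrightarrow> \<exists>n\<ge>N. x (int n) = c j"
    unfolding x_def by (fact periodic(2)[OF Pc(1)])
  have per3: "\<And>j N. j \<le> P \<Longrightarrow> \<exists>n\<ge>N. x (- int n) = c j"
    unfolding x_def by (fact periodic(3)[OF Pc(1)])
  have po: "two_sided_pseudo_orbit X f \<delta> x"
    using per1 AX(1) unfolding two_sided_pseudo_orbit_def by blast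
  obtain z where zt: "full_trajectory X f z" and zs: "\<forall>K::nat. \<exists>N::nat. N \<ge> K \<and>
             hausdorff_dist (closure {z (int N + int i) | i::nat. True})
                            (closure {x (int N + int i) | i::nat. True}) < e/2 \<and>
             hausdorff_dist (closure {z (- int i - int N) | i::nat. True})
                            (closure {x (- int i - int N) | i::nat. True}) < e/2"
    using shad po by blast
  have zX: "\<forall>n. z n \<in> X" using zt unfolding full_trajectory_def by blast
  have xA: "\<forall>n. x n \<in> A" using per1 by blast
  have net: "\<exists>j\<le>P. dist a' (c j) < e/4" if a'A: "a' \<in> A" for a'
  proof -
    obtain s where s: "s \<in> S" "a' \<in> ball s (e/4)" using S(3) a'A by blast
    then obtain j where "j \<le> P" "s = c j" using Pc(2) by blast
    then show ?thesis using s by (auto simp: dist_commute)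
  qed
  have dens1: "\<forall>N. \<forall>a'\<in>A. \<exists>n\<ge>N. dist a' ((\<lambda>n. x (int n)) n) < e/4"
  proof (intro allI ballI)
    fix N a' assume "a' \<in> A"
    then obtain j where j: "j \<le> P" "dist a' (c j) < e/4" using net by blast
    then obtain n where "n \<ge> N" "x (int n) = c j" using per2 by blast
    then show "\<exists>n\<ge>N. dist a' ((\<lambda>n. x (int n)) n) < e/4" using j by auto
  qed
  have dens2: "\<forall>N. \<forall>a'\<in>A. \<exists>n\<ge>N. dist a' ((\<lambda>n. x (- int n)) n) < e/4"
  proof (intro allI ballI)
    fix N a' assume "a' \<in> A"
    then obtain j where j: "j \<le> P" "dist a' (c j) < e/4" using net by blast
    then obtain n where "n \<ge> N" "x (- int n) = c j" using per3 by blast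
    then show "\<exists>n\<ge>N. dist a' ((\<lambda>n. x (- int n)) n) < e/4" using j by auto
  qed
  have sh1: "\<forall>K. \<exists>N\<ge>K. hausdorff_dist (closure (tl_set (\<lambda>n. z (int n)) N))
      (closure (tl_set (\<lambda>n. x (int n)) N)) < e/2"
    unfolding tl_fw using zs by blast
  have sh2: "\<forall>K. \<exists>N\<ge>K. hausdorff_dist (closure (tl_set (\<lambda>n. z (- int n)) N))
      (closure (tl_set (\<lambda>n. x (- int n)) N)) < e/2"
    unfolding tl_bw using zs by blast
  have o: "hausdorff_dist (omega_set z) A < e"
    unfolding omega_eq
    by (rule generic[OF assms(1) AX(1) AX(3) AX(2) _ _ e dens1 sh1]) (use xA zX in auto)
  have al: "hausdorff_dist (alpha_set z) A < e"
    unfolding alpha_eq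
    by (rule generic[OF assms(1) AX(1) AX(3) AX(2) _ _ e dens2 sh2]) (use xA zX in auto)
  show "\<exists>x. full_trajectory X f x \<and> hausdorff_dist (alpha_set x) A < e \<and> hausdorff_dist (omega_set x) A < e"
    using zt o al by blast
qed
end
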